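(* Let $G$ be a mixed signed, directed graph. A subset $F\subseteq\mathbb{R}^n$ is a facet of $\mathrm{cone}(\mathcal{P}_G)$ if and only if there exists a facet subgraph $H$ of $G$ such that $\mathrm{cone}(\mathcal{P}_H)=F$.
   Context: A mixed signed, directed graph $G$ on vertex set $\{1,\dots,n\}$ has a set of signed edges $+ij$ or $-ij$ (loops $\pm ii$ allowed) and directed edges $(i,j)$ with $i\ne j$; between a pair of vertices any subset of $+ij,-ij,(i,j),(j,i)$ may occur. Define $\rho(\pm ij)=\pm(e_i+e_j)$ (so $\rho(\pm ii)=\pm2e_i$) and $\rho((i,j))=e_j-e_i$ in $\mathbb{R}^n$; $\mathcal{P}_G=\mathrm{conv}(\rho(E(G)))$, $\mathrm{cone}(\mathcal{P}_G)$ is the set of nonnegative real combinations of its points, and a facet is a proper face of maximal dimension. The augmented signed graph $\widetilde G$ is obtained by replacing each directed edge $(i,j)$ by a new (artificial) vertex $t_{(i,j)}$ and the two signed edges $-i\,t_{(i,j)}$ and $+t_{(i,j)}\,j$. A subgraph $H$ of $G$ has vertex set $\{1,\dots,n\}$ and a subset of the edges of $G$; $G\setminus H$ is the set of edges of $G$ not in $H$; $\widetilde H$ is the augmented graph of $H$ (with artificial vertices only for directed edges of $H$). For a signed graph, a component is a maximal connected subgraph (isolated vertices are components), and it is bipartite if its vertex set can be partitioned into $L,R$ (one possibly empty) with every edge having one endpoint in each (a component with a loop is not bipartite). Components and bipartite components of $G$ (resp. $H$) are those of $\widetilde G$ (resp. $\widetilde H$); $\mathrm{bicomp}(\cdot)$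 counts bipartite components. For a set $S$ of vertices of an augmented graph, $\pi(S)=S\cap\{1,\dots,n\}$. A subgraph $H$ of $G$ is a facet subgraph if (1) $\mathrm{bicomp}(H)=\mathrm{bicomp}(G)+1$, and (2) for any bipartite component $H'$ of $H$ which is not a component of $G$, there is a bipartition $V(\widetilde{H'})=\widetilde L\cup\widetilde R$ such that, with $L=\pi(\widetilde L)$ and $R=\pi(\widetilde R)$, every edge $e\in G\setminus H$ is of one of the forms: a positive edge with at least one endpoint in $L$ and none in $R$; a negative edge with at least one endpoint in $R$ and none in $L$; a directed edge $(i,j)$ with $j\in L$ and $i\notin L$; or a directed edge $(i,j)$ with $i\in R$ and $j\notin R$. *)

theory Defs
  imports "HOL-Analysis.Analysis"
begin

text \<open>Edges of a mixed signed, directed graph on the vertex type 'v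
  (the vertex set {1..n} is modelled by a finite type 'v, n = CARD('v)).
  A signed edge +ij / -ij is stored by its (unordered) endpoint set {i,j}
  (a singleton for a loop); a directed edge (i,j) by its ordered pair.\<close>
datatype 'v edge = Pos "'v set" | Neg "'v set" | Dir 'v 'v

definition wf_edge :: "'v edge \<Rightarrow> bool" where
  "wf_edge x = (case x of
      Pos e \<Rightarrow> (\<exists>i j. e = {i, j})
    | Neg e \<Rightarrow> (\<exists>i j. e = {i, j})
    | Dir i j \<Rightarrow> i \<noteq> j)"

definition mixed_graph :: "'v edge set \<Rightarrow> bool" where
  "mixed_graph G \<longleftrightarrow> (\<forall>x\<in>G. wf_edge x)"

definition sgn_vec :: "'v::finite set \<Rightarrow> real ^ 'v" where
  "sgn_vec e = (if \<exists>i. e = {i} then 2 else 1) *\<^sub>R (\<Sum>i\<in>e. axis i 1)"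

fun rho :: "'v::finite edge \<Rightarrow> real ^ 'v" where
  "rho (Pos e) = sgn_vec e"
| "rho (Neg e) = - sgn_vec e"
| "rho (Dir i j) = axis j 1 - axis i 1"

definition edge_polytope :: "'v::finite edge set \<Rightarrow> (real ^ 'v) set" where
  "edge_polytope G = convex hull (rho ` G)"

definition nonneg_cone :: "'a::real_vector set \<Rightarrow> 'a set" where
  "nonneg_cone P = {\<Sum>v\<in>T. c v *\<^sub>R v | T c. finite T \<and> T \<subseteq> P \<and> (\<forall>v\<in>T. 0 \<le> c v)}"

text \<open>Augmented signed graph: original vertices Inl i, artificial vertices
  Inr (i,j) = t_(i,j).  For components and bipartiteness only the underlying
  (unsigned) edges matter; an edge is represented by its endpoint set.\<close>
definition aug_vertices :: "'v edge set \<Rightarrow> ('v + 'v \<times> 'v) set" where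
  "aug_vertices G = range Inl \<union> {Inr (i, j) | i j. Dir i j \<in> G}"

definition aug_edges :: "'v edge set \<Rightarrow> ('v + 'v \<times> 'v) set set" where
  "aug_edges G =
     {Inl ` e | e. Pos e \<in> G \<or> Neg e \<in> G}
   \<union> {{Inl i, Inr (i, j)} | i j. Dir i j \<in> G}
   \<union> {{Inr (i, j), Inl j} | i j. Dir i j \<in> G}"

definition aug_adj :: "'v edge set \<Rightarrow> ('v + 'v \<times> 'v) \<Rightarrow> ('v + 'v \<times> 'v) \<Rightarrow> bool" where
  "aug_adj G x y \<longleftrightarrow> (\<exists>e\<in>aug_edges G. x \<in> e \<and> y \<in> e)"

definition comps :: "'v edge set \<Rightarrow> ('v + 'v \<times> 'v) set set" where
  "comps G = {{y \<in> aug_vertices G. (aug_adj G)\<^sup>*\<^sup>* x y} | x. x \<in> aug_vertices G}"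

definition comp_edges :: "'v edge set \<Rightarrow> ('v + 'v \<times> 'v) set \<Rightarrow> ('v + 'v \<times> 'v) set set" where
  "comp_edges G C = {e \<in> aug_edges G. e \<subseteq> C}"

definition bipartition :: "'v edge set \<Rightarrow> ('v + 'v \<times> 'v) set \<Rightarrow>
    ('v + 'v \<times> 'v) set \<Rightarrow> ('v + 'v \<times> 'v) set \<Rightarrow> bool" where
  "bipartition G C L R \<longleftrightarrow> L \<union> R = C \<and> L \<inter> R = {} \<and>
     (\<forall>e\<in>comp_edges G C. (\<exists>a b. a \<in> L \<and> b \<in> R \<and> e = {a, b}))"

definition bipartite_comp :: "'v edge set \<Rightarrow> ('v + 'v \<times> 'v) set \<Rightarrow> bool" where
  "bipartite_comp G C \<longleftrightarrow> (\<exists>L R. bipartition G C L R)"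

definition bicomp :: "'v edge set \<Rightarrow> nat" where
  "bicomp G = card {C \<in> comps G. bipartite_comp G C}"

text \<open>A component (C, edges of H~ in C) of H is a component of G iff it coincides
  as a subgraph (same vertex set and same edge set) with a component of G~.\<close>
definition is_comp_of :: "'v edge set \<Rightarrow> 'v edge set \<Rightarrow> ('v + 'v \<times> 'v) set \<Rightarrow> bool" where
  "is_comp_of G H C \<longleftrightarrow> C \<in> comps G \<and> comp_edges G C = comp_edges H C"

definition proj :: "('v + 'v \<times> 'v) set \<Rightarrow> 'v set" where
  "proj S = {i. Inl i \<in> S}"

definition edge_ok :: "'v set \<Rightarrow> 'v set \<Rightarrow> 'v edge \<Rightarrow> bool" where
  "edge_ok L R x = (case x of
      Pos e \<Rightarrow> e \<inter> L \<noteq> {} \<and> e \<inter> R = {}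
    | Neg e \<Rightarrow> e \<inter> R \<noteq> {} \<and> e \<inter> L = {}
    | Dir i j \<Rightarrow> (j \<in> L \<and> i \<notin> L) \<or> (i \<in> R \<and> j \<notin> R))"

definition facet_subgraph :: "'v edge set \<Rightarrow> 'v edge set \<Rightarrow> bool" where
  "facet_subgraph G H \<longleftrightarrow> H \<subseteq> G \<and>
     bicomp H = bicomp G + 1 \<and>
     (\<forall>C \<in> comps H. bipartite_comp H C \<and> \<not> is_comp_of G H C \<longrightarrow>
        (\<exists>L R. bipartition H C L R \<and>
           (\<forall>x \<in> G - H. edge_ok (proj L) (proj R) x)))"

end

theory Submission
  imports Defs
begin


lemma finite_edges: "finite (G :: ('v::finite) edge set)"
proof -
  have "G \<subseteq> range Pos \<union> range Neg \<union> (\<lambda>(i,j). Dir i j) ` UNIV" by (auto, case_tac x, auto)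
  moreover have "finite (range Pos \<union> range Neg \<union> (\<lambda>(i,j). Dir i j) ` (UNIV :: ('v \<times> 'v) set))" by simp
  ultimately show ?thesis by (rule finite_subset)
qed

lemma cc_sum: "finite T \<Longrightarrow> (\<And>v. v \<in> T \<Longrightarrow> v \<in> convex_cone hull X) \<Longrightarrow> (\<And>v. v \<in> T \<Longrightarrow> 0 \<le> c v)
   \<Longrightarrow> (\<Sum>v\<in>T. c v *\<^sub>R v) \<in> convex_cone hull X"
proof (induction T rule: finite_induct)
  case empty then show ?case by (simp add: convex_cone_hull_contains_0)
next
  case (insert x F) then show ?case by (simp add: convex_cone_hull_add convex_cone_hull_mul)
qed

lemma cc_explicit:
  assumes "finite X"
  shows "convex_cone hull X = {\<Sum>v\<in>X. c v *\<^sub>R v | c. \<forall>v\<in>X. 0 \<le> c v}"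
proof
  show "convex_cone hull X \<subseteq> {\<Sum>v\<in>X. c v *\<^sub>R v | c. \<forall>v\<in>X. 0 \<le> c v}"
  proof (rule hull_minimal)
    show "X \<subseteq> {\<Sum>v\<in>X. c v *\<^sub>R v | c. \<forall>v\<in>X. 0 \<le> c v}"
    proof
      fix x assume "x \<in> X"
      have "(\<Sum>v\<in>X. (if v = x then 1 else 0) *\<^sub>R v) = (\<Sum>v\<in>X. if v = x then v else 0)"
        by (rule sum.cong) auto
      then have "x = (\<Sum>v\<in>X. (if v = x then 1 else 0) *\<^sub>R v)"
        using assms \<open>x \<in> X\<close> by simp
      then show "x \<in> {\<Sum>v\<in>X. c v *\<^sub>R v | c. \<forall>v\<in>X. 0 \<le> c v}" by force
    qed
    show "convex_cone {\<Sum>v\<in>X. c v *\<^sub>R v | c. \<forall>v\<in>X. 0 \<le> c v}"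
      unfolding convex_cone_iff
    proof (intro conjI ballI allI impI)
      show "0 \<in> {\<Sum>v\<in>X. c v *\<^sub>R v | c. \<forall>v\<in>X. 0 \<le> c v}"
        by (rule CollectI, rule exI[of _ "\<lambda>_. 0"]) simp
    next
      fix x y assume "x \<in> {\<Sum>v\<in>X. c v *\<^sub>R v | c. \<forall>v\<in>X. 0 \<le> c v}" "y \<in> {\<Sum>v\<in>X. c v *\<^sub>R v | c. \<forall>v\<in>X. 0 \<le> c v}"
      then obtain c d where "x = (\<Sum>v\<in>X. c v *\<^sub>R v)" "\<forall>v\<in>X. 0 \<le> c v" "y = (\<Sum>v\<in>X. d v *\<^sub>R v)" "\<forall>v\<in>X. 0 \<le> d v" by auto
      then show "x + y \<in> {\<Sum>v\<in>X. c v *\<^sub>R v | c. \<forall>v\<in>X. 0 \<le> c v}"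
        by (intro CollectI exI[of _ "\<lambda>v. c v + d v"]) (simp add: scaleR_add_left sum.distrib)
    next
      fix x :: 'a and r :: real assume "x \<in> {\<Sum>v\<in>X. c v *\<^sub>R v | c. \<forall>v\<in>X. 0 \<le> c v}" "0 \<le> r"
      then obtain c where "x = (\<Sum>v\<in>X. c v *\<^sub>R v)" "\<forall>v\<in>X. 0 \<le> c v" by auto
      with \<open>0 \<le> r\<close> show "r *\<^sub>R x \<in> {\<Sum>v\<in>X. c v *\<^sub>R v | c. \<forall>v\<in>X. 0 \<le> c v}"
        by (intro CollectI exI[of _ "\<lambda>v. r * c v"]) (simp add: scaleR_sum_right)
    qed
  qed
  show "{\<Sum>v\<in>X. c v *\<^sub>R v | c. \<forall>v\<in>X. 0 \<le> c v} \<subseteq> convex_cone hull X"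
    using assms by (auto intro: cc_sum hull_inc)
qed

lemma nonneg_cone_eq:
  assumes "finite X"
  shows "nonneg_cone (convex hull X) = convex_cone hull X"
proof
  show "nonneg_cone (convex hull X) \<subseteq> convex_cone hull X"
    unfolding nonneg_cone_def
    using convex_hull_subset_convex_cone_hull by (auto intro!: cc_sum)
  show "convex_cone hull X \<subseteq> nonneg_cone (convex hull X)"
    unfolding cc_explicit[OF assms] nonneg_cone_def
    using assms hull_subset[of X convex] by blast
qed

lemma dim_cc: "dim (convex_cone hull X) = dim (X :: 'a::euclidean_space set)"
proof -
  have "span (convex_cone hull X) = span X"
  proof
    show "span (convex_cone hull X) \<subseteq> span X"
      by (metis convex_cone_span hull_minimal span_minimal span_superset subspace_span)
    show "span X \<subseteq> span (convex_cone hull X)" by (simp add: hull_subset span_mono)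
  qed
  then show ?thesis by (metis dim_span)
qed

lemma aff_dim_cc: "aff_dim (convex_cone hull X) = int (dim (X :: 'a::euclidean_space set))"
  by (simp add: aff_dim_zero convex_cone_hull_contains_0 hull_inc dim_cc)

lemma inner_rho_Pos: "a \<bullet> rho (Pos {i,j}) = (if i = j then 2 * a$i else a$i + a$j)"
  by (auto simp: sgn_vec_def inner_axis inner_sum_right doubleton_eq_iff)

lemma inner_rho_Neg: "a \<bullet> rho (Neg {i,j}) = (if i = j then - 2 * a$i else - (a$i + a$j))"
  by (auto simp: sgn_vec_def inner_axis inner_sum_right doubleton_eq_iff)

lemma inner_rho_Dir: "a \<bullet> rho (Dir i j) = a$j - a$i"
  by (simp add: inner_axis inner_diff_right)




declare rho.simps[simp del]

lemma inner_rho_Pos1: "a \<bullet> rho (Pos {i}) = 2 * a$i"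
  using inner_rho_Pos[of a i i] by simp
lemma inner_rho_Neg1: "a \<bullet> rho (Neg {i}) = - 2 * a$i"
  using inner_rho_Neg[of a i i] by simp
lemmas inner_rho = inner_rho_Pos inner_rho_Neg inner_rho_Dir inner_rho_Pos1 inner_rho_Neg1

type_synonym 'v avert = "'v + 'v \<times> 'v"

definition compo :: "'v edge set \<Rightarrow> 'v avert \<Rightarrow> 'v avert set" where
  "compo H x = {y \<in> aug_vertices H. (aug_adj H)\<^sup>*\<^sup>* x y}"

lemma comps_def2: "comps H = compo H ` aug_vertices H"
  by (auto simp: comps_def compo_def)

lemma aug_edges_sub: "e \<in> aug_edges H \<Longrightarrow> e \<subseteq> aug_vertices H"
  by (auto simp: aug_edges_def aug_vertices_def)

lemma adj_sym: "aug_adj H x y \<Longrightarrow> aug_adj H y x" by (auto simp: aug_adj_def)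
lemma adj_vert: "aug_adj H x y \<Longrightarrow> y \<in> aug_vertices H"
  using aug_edges_sub by (fastforce simp: aug_adj_def)

lemma rtc_sym: "(aug_adj H)\<^sup>*\<^sup>* x y \<Longrightarrow> (aug_adj H)\<^sup>*\<^sup>* y x"
  by (induction rule: rtranclp_induct) (auto intro: converse_rtranclp_into_rtranclp adj_sym)

lemma rtc_vert: "(aug_adj H)\<^sup>*\<^sup>* x y \<Longrightarrow> x \<in> aug_vertices H \<Longrightarrow> y \<in> aug_vertices H"
  by (induction rule: rtranclp_induct) (auto dest: adj_vert)

lemma compo_self: "x \<in> aug_vertices H \<Longrightarrow> x \<in> compo H x"
  by (simp add: compo_def)

lemma compo_eq: assumes "K \<in> comps H" "y \<in> K" shows "K = compo H y"
proof -
  obtain x where x: "x \<in> aug_vertices H" "K = compo H x" using assms by (auto simp: comps_def2)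
  then have xy: "(aug_adj H)\<^sup>*\<^sup>* x y" using assms by (auto simp: compo_def)
  show ?thesis using x xy rtc_sym[OF xy]
    by (auto simp: compo_def intro: rtranclp_trans)
qed

lemma comp_sub: "K \<in> comps H \<Longrightarrow> K \<subseteq> aug_vertices H"
  by (auto simp: comps_def2 compo_def)

lemma comp_closed: assumes "K \<in> comps H" "y \<in> K" "aug_adj H y z" shows "z \<in> K"
proof -
  have "K = compo H y" using assms compo_eq by blast
  then show ?thesis using assms(3) adj_vert by (auto simp: compo_def)
qed

lemma comp_rtc: assumes "K \<in> comps H" "x \<in> K" "y \<in> K" shows "(aug_adj H)\<^sup>*\<^sup>* x y"
  using compo_eq[OF assms(1,2)] assms(3) by (auto simp: compo_def)

lemma comp_edge: assumes "K \<in> comps H" "e \<in> aug_edges H" "x \<in> e" "x \<in> K" shows "e \<subseteq> K"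
  using assms comp_closed by (fastforce simp: aug_adj_def)

lemma comp_Inl: assumes "K \<in> comps H" shows "\<exists>i. Inl i \<in> K"
proof -
  obtain x where x: "x \<in> aug_vertices H" "K = compo H x" using assms by (auto simp: comps_def2)
  show ?thesis
  proof (cases x)
    case (Inl i) then show ?thesis using x compo_self by blast
  next
    case (Inr p)
    then obtain i j where p: "x = Inr (i,j)" "Dir i j \<in> H" using x by (auto simp: aug_vertices_def)
    then have "{Inl i, Inr (i,j)} \<in> aug_edges H" by (auto simp: aug_edges_def)
    then have "aug_adj H x (Inl i)" using p by (auto simp: aug_adj_def)
    then show ?thesis using comp_closed[OF assms] x compo_self by blast
  qed
qed

lemma comps_disj: "A \<in> comps H \<Longrightarrow> B \<in> comps H \<Longrightarrow> x \<in> A \<Longrightarrow> x \<in> B \<Longrightarrow> A = B"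
  using compo_eq by metis

lemma Inl_vert: "Inl i \<in> aug_vertices H" by (simp add: aug_vertices_def)

lemma Inl_comp: "compo H (Inl i) \<in> comps H" "Inl i \<in> compo H (Inl i)"
  by (auto simp: comps_def2 Inl_vert compo_self)

lemma finite_aug_vertices: "finite (aug_vertices (H :: ('v::finite) edge set))"
proof -
  have "aug_vertices H \<subseteq> range Inl \<union> range Inr" by (auto simp: aug_vertices_def)
  moreover have "finite (range Inl \<union> range Inr :: ('v + 'v \<times> 'v) set)" by simp
  ultimately show ?thesis by (rule finite_subset)
qed

lemma finite_comps: "finite (comps (H :: ('v::finite) edge set))"
  by (simp add: comps_def2 finite_aug_vertices)

lemma edgeP: "Pos s \<in> H \<Longrightarrow> Inl ` s \<in> aug_edges H" by (auto simp: aug_edges_def)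
lemma edgeN: "Neg s \<in> H \<Longrightarrow> Inl ` s \<in> aug_edges H" by (auto simp: aug_edges_def)
lemma edgeD1: "Dir i j \<in> H \<Longrightarrow> {Inl i, Inr (i,j)} \<in> aug_edges H" by (auto simp: aug_edges_def)
lemma edgeD2: "Dir i j \<in> H \<Longrightarrow> {Inr (i,j), Inl j} \<in> aug_edges H" by (auto simp: aug_edges_def)

lemma aug_edge_doubleton: assumes "mixed_graph H" "e \<in> aug_edges H" shows "\<exists>p q. e = {p,q}"
proof -
  have W: "\<And>x. x \<in> H \<Longrightarrow> wf_edge x" using assms(1) by (auto simp: mixed_graph_def)
  from assms(2) consider (PN) s where "e = Inl ` s" "Pos s \<in> H \<or> Neg s \<in> H"
    | (D1) i j where "e = {Inl i, Inr (i,j)}"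
    | (D2) i j where "e = {Inr (i,j), Inl j}"
    by (auto simp: aug_edges_def)
  then show ?thesis
  proof cases
    case PN
    have "\<exists>i j. s = {i,j}" using PN W[of "Pos s"] W[of "Neg s"] by (auto simp: wf_edge_def)
    then obtain i j where "s = {i,j}" by blast
    then show ?thesis using PN by auto
  qed auto
qed

definition Ann :: "('v::finite) edge set \<Rightarrow> (real ^ 'v) set" where
  "Ann H = {a. \<forall>e\<in>H. a \<bullet> rho e = 0}"

lemma subspace_Ann: "subspace (Ann H)"
  by (auto simp: subspace_def Ann_def inner_add_left)

lemma Ann_anti: "H \<subseteq> G \<Longrightarrow> Ann G \<subseteq> Ann H" by (auto simp: Ann_def)

definition pot :: "'v edge set \<Rightarrow> ('v avert \<Rightarrow> real) \<Rightarrow> bool" where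
  "pot H f \<longleftrightarrow> (\<forall>e\<in>aug_edges H. \<forall>x y. e = {x,y} \<longrightarrow> f x + f y = 0)"

definition ext :: "real ^ 'v \<Rightarrow> 'v avert \<Rightarrow> real" where
  "ext a x = (case x of Inl i \<Rightarrow> a$i | Inr p \<Rightarrow> - a$(fst p))"

definition bt :: "'v avert set \<Rightarrow> 'v avert set \<Rightarrow> 'v avert \<Rightarrow> real" where
  "bt L R x = (if x \<in> L then 1 else if x \<in> R then -1 else 0)"

definition bvec :: "'v avert set \<Rightarrow> 'v avert set \<Rightarrow> real ^ ('v::finite)" where
  "bvec L R = (\<chi> i. bt L R (Inl i))"

lemma bvec_nth: "bvec L R $ i = bt L R (Inl i)" by (simp add: bvec_def)

lemma potD: "pot H f \<Longrightarrow> e \<in> aug_edges H \<Longrightarrow> e = {x,y} \<Longrightarrow> f x + f y = 0"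
  by (auto simp: pot_def)

lemma pot_Ann:
  assumes "mixed_graph H" "pot H f"
  shows "(\<chi> i. f (Inl i)) \<in> Ann H"
  unfolding Ann_def
proof (intro CollectI ballI)
  fix e assume e: "e \<in> H"
  then have wf: "wf_edge e" using assms(1) by (auto simp: mixed_graph_def)
  show "(\<chi> i. f (Inl i)) \<bullet> rho e = 0"
  proof (cases e)
    case (Pos s)
    then obtain i j where s: "s = {i,j}" using wf by (auto simp: wf_edge_def)
    have "f (Inl i) + f (Inl j) = 0"
      using potD[OF assms(2) edgeP[of s H]] e Pos s by auto
    then show ?thesis using Pos s by (cases "i = j") (simp_all add: inner_rho)
  next
    case (Neg s)
    then obtain i j where s: "s = {i,j}" using wf by (auto simp: wf_edge_def)
    have "f (Inl i) + f (Inl j) = 0"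
      using potD[OF assms(2) edgeN[of s H]] e Neg s by auto
    then show ?thesis using Neg s by (cases "i = j") (simp_all add: inner_rho)
  next
    case (Dir i j)
    have "f (Inl i) + f (Inr (i,j)) = 0" using potD[OF assms(2) edgeD1] e Dir by auto
    moreover have "f (Inr (i,j)) + f (Inl j) = 0" using potD[OF assms(2) edgeD2] e Dir by auto
    ultimately show ?thesis using Dir by (simp add: inner_rho_Dir del: rho.simps)
  qed
qed

lemma Ann_pot:
  assumes "mixed_graph H" "a \<in> Ann H"
  shows "pot H (ext a)"
  unfolding pot_def
proof (intro ballI allI impI)
  fix e x y assume e: "e \<in> aug_edges H" and exy: "e = {x,y}"
  have A: "\<And>e. e \<in> H \<Longrightarrow> a \<bullet> rho e = 0" using assms(2) by (auto simp: Ann_def)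
  have W: "\<And>e. e \<in> H \<Longrightarrow> wf_edge e" using assms(1) by (auto simp: mixed_graph_def)
  from e consider (PN) s where "e = Inl ` s" "Pos s \<in> H \<or> Neg s \<in> H"
    | (D1) i j where "e = {Inl i, Inr (i,j)}" "Dir i j \<in> H"
    | (D2) i j where "e = {Inr (i,j), Inl j}" "Dir i j \<in> H"
    by (auto simp: aug_edges_def)
  then show "ext a x + ext a y = 0"
  proof cases
    case PN
    have "\<exists>i j. s = {i,j}" using PN W[of "Pos s"] W[of "Neg s"] by (auto simp: wf_edge_def)
    then obtain i j where s: "s = {i,j}" by blast
    have "a \<bullet> rho (Pos s) = 0 \<or> a \<bullet> rho (Neg s) = 0" using PN A by auto
    then have "(if i = j then 2 * a$i else a$i + a$j) = 0"
      using s by (auto simp: inner_rho_Pos inner_rho_Neg simp del: rho.simps split: if_splits)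
    moreover have "{Inl i, Inl j} = {x,y}" using PN s exy by simp
    ultimately show ?thesis by (auto simp: doubleton_eq_iff ext_def split: if_splits)
  next
    case D1 then show ?thesis using exy by (auto simp: doubleton_eq_iff ext_def)
  next
    case D2
    then have "a$j - a$i = 0" using A inner_rho_Dir by metis
    then show ?thesis using D2 exy by (auto simp: doubleton_eq_iff ext_def)
  qed
qed

lemma ext_Inl[simp]: "ext a (Inl i) = a$i" by (simp add: ext_def)




lemma bip_pot:
  assumes K: "K \<in> comps H" and bp: "bipartition H K L R"
  shows "pot H (bt L R)"
  unfolding pot_def
proof (intro ballI allI impI)
  fix e x y assume e: "e \<in> aug_edges H" and exy: "e = {x,y}"
  have LR: "L \<union> R = K" "L \<inter> R = {}" using bp by (auto simp: bipartition_def)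
  show "bt L R x + bt L R y = 0"
  proof (cases "x \<in> K")
    case True
    then have "e \<subseteq> K" using comp_edge[OF K e] exy by auto
    then have "e \<in> comp_edges H K" using e by (simp add: comp_edges_def)
    then obtain p q where pq: "p \<in> L" "q \<in> R" "e = {p,q}" using bp by (auto simp: bipartition_def)
    then have "p \<noteq> q" using LR by auto
    then have "(x = p \<and> y = q) \<or> (x = q \<and> y = p)" using pq exy by (auto simp: doubleton_eq_iff)
    then show ?thesis using pq LR by (auto simp: bt_def)
  next
    case False
    then have "y \<notin> K" using comp_edge[OF K e, of y] exy by auto
    then show ?thesis using False LR by (auto simp: bt_def)
  qed
qed

lemma bip_Ann:
  assumes "mixed_graph H" "K \<in> comps H" "bipartition H K L R"
  shows "bvec L R \<in> Ann H"
  using pot_Ann[OF assms(1) bip_pot[OF assms(2,3)]] by (simp add: bvec_def)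

lemma bip_side:
  assumes f: "pot H f" and K: "K \<in> comps H" and bp: "bipartition H K L R"
    and x: "x \<in> K" and y: "y \<in> K"
  shows "f y * bt L R y = f x * bt L R x"
proof -
  have LR: "L \<union> R = K" "L \<inter> R = {}" using bp by (auto simp: bipartition_def)
  have xv: "x \<in> aug_vertices H" using comp_sub[OF K] x by auto
  have "(aug_adj H)\<^sup>*\<^sup>* x y" using comp_rtc[OF K x y] .
  then show ?thesis
  proof (induction rule: rtranclp_induct)
    case base then show ?case by simp
  next
    case (step z w)
    have zK: "z \<in> K" using step(1) rtc_vert[OF step(1) xv] compo_eq[OF K x] by (auto simp: compo_def)
    obtain e where e: "e \<in> aug_edges H" "z \<in> e" "w \<in> e" using step(2) by (auto simp: aug_adj_def)
    then have "e \<subseteq> K" using comp_edge[OF K] zK by blast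
    then have "e \<in> comp_edges H K" using e by (simp add: comp_edges_def)
    then obtain p q where pq: "p \<in> L" "q \<in> R" "e = {p,q}" using bp by (auto simp: bipartition_def)
    show ?case
    proof (cases "z = w")
      case True then show ?thesis using step by simp
    next
      case False
      then have zw: "(z = p \<and> w = q) \<or> (z = q \<and> w = p)" using pq e by auto
      then have "e = {z,w}" using pq by auto
      then have "f z + f w = 0" using potD[OF f e(1)] by simp
      moreover have "bt L R p = 1" "bt L R q = -1" using pq LR by (auto simp: bt_def)
      ultimately have "f w * bt L R w = f z * bt L R z" using zw by auto
      then show ?thesis using step by simp
    qed
  qed
qed

lemma restr:
  assumes "mixed_graph H" "a \<in> Ann H" and K: "K \<in> comps H" and bp: "bipartition H K L R"
  shows "\<exists>c. \<forall>i. Inl i \<in> K \<longrightarrow> a$i = c * bvec L R $ i"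
proof -
  have LR: "L \<union> R = K" "L \<inter> R = {}" using bp by (auto simp: bipartition_def)
  obtain i0 where i0: "Inl i0 \<in> K" using comp_Inl[OF K] by blast
  have f: "pot H (ext a)" using Ann_pot assms by blast
  define c where "c = ext a (Inl i0) * bt L R (Inl i0)"
  have "\<forall>i. Inl i \<in> K \<longrightarrow> a$i = c * bvec L R $ i"
  proof (intro allI impI)
    fix i assume iK: "Inl i \<in> K"
    have "ext a (Inl i) * bt L R (Inl i) = c" unfolding c_def by (rule bip_side[OF f K bp i0 iK])
    then show "a$i = c * bvec L R $ i" using iK LR by (auto simp: bt_def bvec_nth)
  qed
  then show ?thesis by blast
qed

lemma nonbip:
  assumes H: "mixed_graph H" and f: "pot H f" and K: "K \<in> comps H" and nb: "\<not> bipartite_comp H K"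
    and y: "y \<in> K"
  shows "f y = 0"
proof (rule ccontr)
  assume fy: "f y \<noteq> 0"
  have yv: "y \<in> aug_vertices H" using comp_sub[OF K] y by auto
  have pm: "\<forall>z\<in>K. f z = f y \<or> f z = - f y"
  proof
    fix z assume z: "z \<in> K"
    have "(aug_adj H)\<^sup>*\<^sup>* y z" using comp_rtc[OF K y z] .
    then show "f z = f y \<or> f z = - f y"
    proof (induction rule: rtranclp_induct)
      case base then show ?case by simp
    next
      case (step u w)
      obtain e where e: "e \<in> aug_edges H" "u \<in> e" "w \<in> e" using step(2) by (auto simp: aug_adj_def)
      obtain p q where pq: "e = {p,q}" using aug_edge_doubleton[OF H e(1)] by blast
      show ?case
      proof (cases "u = w")
        case True then show ?thesis using step by simp
      next
        case False
        then have "e = {u,w}" using pq e by auto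
        then have "f u + f w = 0" using potD[OF f e(1)] by simp
        then show ?thesis using step by auto
      qed
    qed
  qed
  define L where "L = {z\<in>K. f z = f y}"
  define R where "R = {z\<in>K. f z = - f y}"
  have "bipartition H K L R"
    unfolding bipartition_def
  proof (intro conjI ballI)
    show "L \<union> R = K" using pm by (auto simp: L_def R_def)
    show "L \<inter> R = {}" using fy by (auto simp: L_def R_def)
  next
    fix e assume e: "e \<in> comp_edges H K"
    then have e1: "e \<in> aug_edges H" "e \<subseteq> K" by (auto simp: comp_edges_def)
    obtain p q where pq: "e = {p,q}" using aug_edge_doubleton[OF H e1(1)] by blast
    have s: "f p + f q = 0" using potD[OF f e1(1) pq] .
    have "p \<in> K" "q \<in> K" using e1 pq by auto
    then have "f p = f y \<or> f p = - f y" "f q = f y \<or> f q = - f y" using pm by auto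
    then show "\<exists>a b. a \<in> L \<and> b \<in> R \<and> e = {a, b}"
      using s fy \<open>p \<in> K\<close> \<open>q \<in> K\<close> pq unfolding L_def R_def
      by (smt (verit) insert_commute mem_Collect_eq)
  qed
  then show False using nb by (auto simp: bipartite_comp_def)
qed

definition pk :: "'v edge set \<Rightarrow> 'v avert set \<Rightarrow> 'v avert set \<times> 'v avert set" where
  "pk H K = (SOME LR. bipartition H K (fst LR) (snd LR))"

definition bvK :: "('v::finite) edge set \<Rightarrow> 'v avert set \<Rightarrow> real ^ 'v" where
  "bvK H K = bvec (fst (pk H K)) (snd (pk H K))"

definition BC :: "'v edge set \<Rightarrow> 'v avert set set" where
  "BC H = {K \<in> comps H. bipartite_comp H K}"

lemma pk: "bipartite_comp H K \<Longrightarrow> bipartition H K (fst (pk H K)) (snd (pk H K))"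
  unfolding pk_def bipartite_comp_def by (rule someI_ex) auto

lemma bvK_nz: assumes "K \<in> BC H" shows "bvK H K $ i \<noteq> 0 \<longleftrightarrow> Inl i \<in> K"
proof -
  have bp: "bipartition H K (fst (pk H K)) (snd (pk H K))" using pk assms by (auto simp: BC_def)
  then show ?thesis by (auto simp: bvK_def bvec_nth bt_def bipartition_def)
qed

lemma Ann_span:
  fixes H :: "('v::finite) edge set"
  assumes H: "mixed_graph H"
  shows "Ann H = span (bvK H ` BC H)"
proof
  show "span (bvK H ` BC H) \<subseteq> Ann H"
  proof (rule span_minimal)
    show "bvK H ` BC H \<subseteq> Ann H"
      by (auto simp: BC_def bvK_def intro: bip_Ann[OF H _ pk])
  qed (rule subspace_Ann)
next
  show "Ann H \<subseteq> span (bvK H ` BC H)"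
  proof
    fix a assume a: "a \<in> Ann H"
    have f: "pot H (ext a)" using Ann_pot H a by blast
    define r :: "('v + 'v \<times> 'v) set \<Rightarrow> real ^ 'v" where "r K = (\<chi> i. if Inl i \<in> K then a$i else (0::real))" for K
    have "a = (\<Sum>K\<in>comps H. r K)"
    proof (subst vec_eq_iff, intro allI)
      fix i
      have "(\<Sum>K\<in>comps H. r K) $ i = (\<Sum>K\<in>comps H. if K = compo H (Inl i) then a$i else 0)"
        unfolding sum_component r_def
        using Inl_comp[where H=H and i=i] comps_disj[where H=H and B="compo H (Inl i)"]
        by (intro sum.cong) auto
      also have "\<dots> = a$i" using Inl_comp[where H=H and i=i] finite_comps[of H] by simp
      finally show "a $ i = (\<Sum>K\<in>comps H. r K) $ i" by simp
    qed
    moreover have "r K \<in> span (bvK H ` BC H)" if K: "K \<in> comps H" for K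
    proof (cases "bipartite_comp H K")
      case True
      have bp: "bipartition H K (fst (pk H K)) (snd (pk H K))" using pk True .
      obtain c where c: "\<forall>i. Inl i \<in> K \<longrightarrow> a$i = c * bvK H K $ i"
        using restr[OF H a K bp] by (auto simp: bvK_def)
      have "r K = c *\<^sub>R bvK H K"
      proof (subst vec_eq_iff, intro allI)
        fix i show "r K $ i = (c *\<^sub>R bvK H K) $ i"
          using c bp by (auto simp: r_def bvK_def bvec_nth bt_def bipartition_def)
      qed
      moreover have "bvK H K \<in> bvK H ` BC H" using K True by (auto simp: BC_def)
      ultimately show ?thesis by (simp add: span_base span_mul)
    next
      case False
      have "r K = 0"
      proof (subst vec_eq_iff, intro allI)
        fix i show "r K $ i = 0 $ i"
          using nonbip[OF H f K False, of "Inl i"] by (auto simp: r_def)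
      qed
      then show ?thesis by (simp add: span_zero)
    qed
    ultimately show "a \<in> span (bvK H ` BC H)" by (simp add: span_sum)
  qed
qed

lemma bvK_orth:
  assumes "K1 \<in> BC H" "K2 \<in> BC H" "K1 \<noteq> K2"
  shows "bvK H K1 \<bullet> bvK H K2 = 0"
proof -
  have "\<forall>i. bvK H K1 $ i * bvK H K2 $ i = 0"
    using bvK_nz[OF assms(1)] bvK_nz[OF assms(2)] comps_disj[where A=K1 and B=K2 and H=H] assms
    by (auto simp: BC_def)
  then show ?thesis unfolding inner_vec_def inner_real_def by (intro sum.neutral) auto
qed

lemma bvK_inj: "inj_on (bvK H) (BC H)"
proof (rule inj_onI)
  fix K1 K2 assume K: "K1 \<in> BC H" "K2 \<in> BC H" "bvK H K1 = bvK H K2"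
  show "K1 = K2"
  proof (rule ccontr)
    assume ne: "K1 \<noteq> K2"
    obtain i where i: "Inl i \<in> K1" using comp_Inl K(1) by (auto simp: BC_def)
    then have "Inl i \<notin> K2" using comps_disj[where A=K1 and B=K2 and H=H] K ne by (auto simp: BC_def)
    then show False using bvK_nz[OF K(1), of i] bvK_nz[OF K(2), of i] i K(3) by simp
  qed
qed

lemma dim_Ann:
  assumes H: "mixed_graph H"
  shows "dim (Ann H) = bicomp H"
proof -
  have ind: "independent (bvK H ` BC H)"
  proof (rule pairwise_orthogonal_independent)
    show "pairwise orthogonal (bvK H ` BC H)"
      unfolding pairwise_def orthogonal_def using bvK_orth by blast
    show "0 \<notin> bvK H ` BC H"
    proof
      assume "0 \<in> bvK H ` BC H"
      then obtain K where K: "K \<in> BC H" "bvK H K = 0" by auto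
      obtain i where "Inl i \<in> K" using comp_Inl K(1) by (auto simp: BC_def)
      then show False using bvK_nz[OF K(1), of i] K(2) by simp
    qed
  qed
  have "dim (Ann H) = dim (bvK H ` BC H)" using Ann_span[OF H] by simp
  also have "\<dots> = card (bvK H ` BC H)" using dim_eq_card_independent[OF ind] .
  also have "\<dots> = card (BC H)" using card_image[OF bvK_inj] .
  finally show ?thesis by (simp add: bicomp_def BC_def)
qed

lemma rank:
  fixes H :: "('v::finite) edge set"
  assumes H: "mixed_graph H"
  shows "dim (rho ` H) + bicomp H = dim (UNIV :: (real ^ 'v) set)"
proof -
  have eq: "{y \<in> UNIV. \<forall>x \<in> span (rho ` H). orthogonal x y} = Ann H"
  proof (intro set_eqI iffI)
    fix y assume "y \<in> {y \<in> UNIV. \<forall>x \<in> span (rho ` H). orthogonal x y}"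
    then have "\<forall>x\<in>span (rho ` H). x \<bullet> y = 0" by (simp add: orthogonal_def)
    moreover have "rho e \<in> span (rho ` H)" if "e \<in> H" for e using that by (simp add: span_base)
    ultimately show "y \<in> Ann H" by (auto simp: Ann_def inner_commute)
  next
    fix y assume y: "y \<in> Ann H"
    show "y \<in> {y \<in> UNIV. \<forall>x \<in> span (rho ` H). orthogonal x y}"
    proof (intro CollectI conjI ballI UNIV_I)
      fix x assume x: "x \<in> span (rho ` H)"
      have "orthogonal y x"
        by (rule orthogonal_to_span[OF x]) (use y in \<open>auto simp: Ann_def orthogonal_def\<close>)
      then show "orthogonal x y" by (simp add: orthogonal_commute)
    qed
  qed
  have "dim {y \<in> UNIV. \<forall>x \<in> span (rho ` H). orthogonal x y} + dim (span (rho ` H)) = dim (UNIV :: (real ^ 'v) set)"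
    using dim_subspace_orthogonal_to_vectors[of "span (rho ` H)" UNIV] by simp
  then show ?thesis using eq dim_Ann[OF H] by simp
qed





lemma okiff:
  assumes LR: "L \<inter> R = {}" and wf: "wf_edge e"
  shows "bvec L R \<bullet> rho e > 0 \<longleftrightarrow> edge_ok (proj L) (proj R) e"
proof (cases e)
  case (Pos s)
  then obtain i j where s: "s = {i,j}" using wf by (auto simp: wf_edge_def)
  show ?thesis using Pos s LR
    by (cases "i = j") (auto simp: inner_rho edge_ok_def proj_def bvec_nth bt_def)
next
  case (Neg s)
  then obtain i j where s: "s = {i,j}" using wf by (auto simp: wf_edge_def)
  show ?thesis using Neg s LR
    by (cases "i = j") (auto simp: inner_rho edge_ok_def proj_def bvec_nth bt_def)
next
  case (Dir i j)
  show ?thesis using Dir LR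
    by (auto simp: inner_rho edge_ok_def proj_def bvec_nth bt_def)
qed


lemma expose:
  fixes X :: "'a::euclidean_space set"
  assumes fin: "finite X" and nn: "\<forall>v\<in>X. 0 \<le> a \<bullet> v"
  shows "convex_cone hull X \<inter> {x. a \<bullet> x = 0} = convex_cone hull {v\<in>X. a \<bullet> v = 0}"
proof
  show "convex_cone hull X \<inter> {x. a \<bullet> x = 0} \<subseteq> convex_cone hull {v\<in>X. a \<bullet> v = 0}"
  proof
    fix x assume x: "x \<in> convex_cone hull X \<inter> {x. a \<bullet> x = 0}"
    then have "x \<in> convex_cone hull X" by blast
    then obtain c where c: "x = (\<Sum>v\<in>X. c v *\<^sub>R v)" "\<forall>v\<in>X. 0 \<le> c v"
      unfolding cc_explicit[OF fin] by blast
    have "(\<Sum>v\<in>X. c v * (a \<bullet> v)) = 0" using x c by (simp add: inner_sum_right)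
    moreover have "\<forall>v\<in>X. 0 \<le> c v * (a \<bullet> v)" using c nn by auto
    ultimately have z: "\<forall>v\<in>X. c v * (a \<bullet> v) = 0"
      using sum_nonneg_eq_0_iff[OF fin, of "\<lambda>v. c v * (a \<bullet> v)"] by simp
    have "x = (\<Sum>v\<in>{v\<in>X. a \<bullet> v = 0}. c v *\<^sub>R v)"
      unfolding c(1) using z fin by (intro sum.mono_neutral_right) auto
    moreover have "(\<Sum>v\<in>{v\<in>X. a \<bullet> v = 0}. c v *\<^sub>R v) \<in> convex_cone hull {v\<in>X. a \<bullet> v = 0}"
      using c(2) fin by (intro cc_sum) (auto intro: hull_inc)
    ultimately show "x \<in> convex_cone hull {v\<in>X. a \<bullet> v = 0}" by simp
  qed
  have "convex_cone hull {v\<in>X. a \<bullet> v = 0} \<subseteq> {x. a \<bullet> x = 0}"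
    by (rule hull_minimal) (auto intro: subspace_imp_convex_cone subspace_hyperplane)
  moreover have "convex_cone hull {v\<in>X. a \<bullet> v = 0} \<subseteq> convex_cone hull X" by (rule hull_mono) auto
  ultimately show "convex_cone hull {v\<in>X. a \<bullet> v = 0} \<subseteq> convex_cone hull X \<inter> {x. a \<bullet> x = 0}" by blast
qed

lemma cone_nonneg:
  fixes X :: "'a::euclidean_space set"
  assumes fin: "finite X" and nn: "\<forall>v\<in>X. 0 \<le> a \<bullet> v" and x: "x \<in> convex_cone hull X"
  shows "0 \<le> a \<bullet> x"
proof -
  obtain c where c: "x = (\<Sum>v\<in>X. c v *\<^sub>R v)" "\<forall>v\<in>X. 0 \<le> c v"
    using x unfolding cc_explicit[OF fin] by blast
  then show ?thesis using nn by (auto simp: inner_sum_right intro!: sum_nonneg)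
qed




lemma aug_edges_mono: "H \<subseteq> G \<Longrightarrow> aug_edges H \<subseteq> aug_edges G"
  unfolding aug_edges_def by (intro Un_mono) auto

lemma aug_vertices_mono: "H \<subseteq> G \<Longrightarrow> aug_vertices H \<subseteq> aug_vertices G"
  unfolding aug_vertices_def by auto

lemma aug_adj_mono: assumes "H \<subseteq> G" "aug_adj H x y" shows "aug_adj G x y"
  using assms(2) aug_edges_mono[OF assms(1)] unfolding aug_adj_def by (meson subsetD)

lemma Inr_vert: "Inr (i,j) \<in> aug_vertices H \<Longrightarrow> Dir i j \<in> H"
  unfolding aug_vertices_def by auto

lemma comp_lemma:
  fixes G H :: "('v::finite) edge set"
  assumes G: "mixed_graph G" and HG: "H \<subseteq> G" and K: "K \<in> comps H" and bp: "bipartition H K L R"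
    and bG: "bvec L R \<in> Ann G" and w: "w \<in> Ann H" and wne: "\<forall>e\<in>G-H. w \<bullet> rho e \<noteq> 0"
  shows "is_comp_of G H K"
proof -
  have H: "mixed_graph H" using G HG by (auto simp: mixed_graph_def)
  have W: "\<And>x. x \<in> G \<Longrightarrow> wf_edge x" using G by (auto simp: mixed_graph_def)
  define b where "b = bvec L R"
  have LR: "L \<union> R = K" "L \<inter> R = {}" using bp by (auto simp: bipartition_def)
  have bnz: "\<And>i. b $ i \<noteq> 0 \<longleftrightarrow> Inl i \<in> K" using LR by (auto simp: b_def bvec_nth bt_def)
  obtain c where c: "\<And>i. Inl i \<in> K \<Longrightarrow> w$i = c * b$i"
    using restr[OF H w K bp] by (auto simp: b_def)
  have bA: "\<And>e. e \<in> G \<Longrightarrow> b \<bullet> rho e = 0" using bG by (auto simp: Ann_def b_def)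
  have wA: "\<And>e. e \<in> H \<Longrightarrow> w \<bullet> rho e = 0" using w by (auto simp: Ann_def)
  have ntPN: "Inl x \<notin> K" if e: "e \<in> G - H" and es: "e = Pos s \<or> e = Neg s" and xs: "x \<in> s" for e s x
  proof
    assume xK: "Inl x \<in> K"
    have b0: "b \<bullet> rho e = 0" using bA e by auto
    have w0: "w \<bullet> rho e \<noteq> 0" using wne e by auto
    have "wf_edge e" using W e by auto
    then obtain i j where s: "s = {i,j}" using es by (auto simp: wf_edge_def)
    have xij: "x = i \<or> x = j" using xs s by auto
    show False
    proof (cases "i = j")
      case True
      then show ?thesis using b0 es s xij bnz[of x] xK by (auto simp: inner_rho)
    next
      case False
      have sum0: "b$i + b$j = 0" using b0 es s False by (auto simp: inner_rho)
      then have "b$i \<noteq> 0" "b$j \<noteq> 0" using xij xK bnz[of x] by auto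
      then have "Inl i \<in> K" "Inl j \<in> K" using bnz by auto
      then have "w$i = c * b$i" "w$j = c * b$j" using c by blast+
      then have "w$i + w$j = c * (b$i + b$j)" by (simp add: algebra_simps)
      then have "w$i + w$j = 0" using sum0 by simp
      then show ?thesis using w0 es s False by (auto simp: inner_rho)
    qed
  qed
  have ntD: "Inl x \<notin> K" if e: "Dir i j \<in> G - H" and xij: "x = i \<or> x = j" for i j x
  proof
    assume xK: "Inl x \<in> K"
    have "b \<bullet> rho (Dir i j) = 0" using bA e by auto
    then have d0: "b$j - b$i = 0" by (simp only: inner_rho)
    have "w \<bullet> rho (Dir i j) \<noteq> 0" using wne e by auto
    then have w0: "w$j - w$i \<noteq> 0" by (metis inner_rho_Dir)
    have "b$i \<noteq> 0" "b$j \<noteq> 0" using d0 xij xK bnz[of x] by auto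
    then have "Inl i \<in> K" "Inl j \<in> K" using bnz by auto
    then have "w$i = c * b$i" "w$j = c * b$j" using c by blast+
    then have "w$j - w$i = c * (b$j - b$i)" by (simp add: algebra_simps)
    then show False using d0 w0 by simp
  qed
  have KvH: "K \<subseteq> aug_vertices H" using comp_sub[OF K] .
  have E1: "e \<in> aug_edges H" if e: "e \<in> aug_edges G" and eK: "e \<inter> K \<noteq> {}" for e
  proof -
    from e consider (PN) s where "e = Inl ` s" "Pos s \<in> G \<or> Neg s \<in> G"
      | (D1) i j where "e = {Inl i, Inr (i,j)}" "Dir i j \<in> G"
      | (D2) i j where "e = {Inr (i,j), Inl j}" "Dir i j \<in> G"
      by (auto simp: aug_edges_def)
    then show ?thesis
    proof cases
      case PN
      show ?thesis
      proof (cases "Pos s \<in> H \<or> Neg s \<in> H")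
        case True then show ?thesis using PN(1) edgeP[of s H] edgeN[of s H] by auto
      next
        case False
        then obtain e' where e': "e' \<in> G - H" "e' = Pos s \<or> e' = Neg s" using PN(2) by auto
        have "Inl x \<notin> K" if "x \<in> s" for x
          using ntPN[OF e'(1) e'(2) that] .
        then have "e \<inter> K = {}" using PN(1) by auto
        then show ?thesis using eK by contradiction
      qed
    next
      case D1
      show ?thesis
      proof (cases "Dir i j \<in> H")
        case True then show ?thesis using D1(1) edgeD1[of i j H] by simp
      next
        case False
        then have "Inl i \<notin> K" using ntD[of i j i] D1(2) by blast
        moreover have "Inr (i,j) \<notin> K" using False KvH Inr_vert[of i j H] by auto
        ultimately show ?thesis using D1 eK by auto
      qed
    next
      case D2
      show ?thesis
      proof (cases "Dir i j \<in> H")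
        case True then show ?thesis using D2(1) edgeD2[of i j H] by simp
      next
        case False
        then have "Inl j \<notin> K" using ntD[of i j j] D2(2) by blast
        moreover have "Inr (i,j) \<notin> K" using False KvH Inr_vert[of i j H] by auto
        ultimately show ?thesis using D2 eK by auto
      qed
    qed
  qed
  have ne: "e \<noteq> {}" if "e \<in> aug_edges G" for e
    using aug_edge_doubleton[OF G that] by auto
  have CE: "comp_edges G K = comp_edges H K"
  proof -
    have "e \<in> aug_edges H" if "e \<in> aug_edges G" "e \<subseteq> K" for e
    proof -
      have "e \<noteq> {}" using ne that(1) .
      then have "e \<inter> K \<noteq> {}" using that(2) by blast
      then show ?thesis using E1 that(1) by blast
    qed
    then show ?thesis using aug_edges_mono[OF HG] unfolding comp_edges_def by blast
  qed
  obtain x where x: "x \<in> K" using comp_Inl[OF K] by blast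
  have Kx: "K = compo H x" using compo_eq[OF K x] .
  have xvG: "x \<in> aug_vertices G" using x KvH aug_vertices_mono[OF HG] by blast
  have "compo G x \<subseteq> K"
  proof
    fix y assume "y \<in> compo G x"
    then have "(aug_adj G)\<^sup>*\<^sup>* x y" by (simp add: compo_def)
    then show "y \<in> K"
    proof (induction rule: rtranclp_induct)
      case base then show ?case using x .
    next
      case (step z y)
      obtain e where e: "e \<in> aug_edges G" "z \<in> e" "y \<in> e" using step(2) by (auto simp: aug_adj_def)
      then have "e \<in> aug_edges H" using E1 step(3) by blast
      then have "aug_adj H z y" using e by (auto simp: aug_adj_def)
      then show ?case using comp_closed[OF K step(3)] by blast
    qed
  qed
  moreover have "K \<subseteq> compo G x"
  proof
    fix y assume y: "y \<in> K"
    then have "(aug_adj H)\<^sup>*\<^sup>* x y" using Kx by (simp add: compo_def)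
    then have "(aug_adj G)\<^sup>*\<^sup>* x y"
      by (induction rule: rtranclp_induct) (auto intro: rtranclp.rtrancl_into_rtrancl aug_adj_mono[OF HG])
    moreover have "y \<in> aug_vertices G" using y KvH aug_vertices_mono[OF HG] by blast
    ultimately show "y \<in> compo G x" by (simp add: compo_def)
  qed
  ultimately have "K = compo G x" by blast
  then have "K \<in> comps G" using xvG by (simp add: comps_def2)
  then show ?thesis using CE by (simp add: is_comp_of_def)
qed




lemma cone_eq: "nonneg_cone (edge_polytope (H :: ('v::finite) edge set)) = convex_cone hull (rho ` H)"
  unfolding edge_polytope_def by (rule nonneg_cone_eq) (simp add: finite_edges)

lemma sub_mixed: "mixed_graph G \<Longrightarrow> H \<subseteq> G \<Longrightarrow> mixed_graph H"
  by (auto simp: mixed_graph_def)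

lemma bicomp_le:
  fixes G H :: "('v::finite) edge set"
  assumes all: "\<forall>K\<in>comps H. bipartite_comp H K \<longrightarrow> is_comp_of G H K"
  shows "bicomp H \<le> bicomp G"
proof -
  have "{K\<in>comps H. bipartite_comp H K} \<subseteq> {K\<in>comps G. bipartite_comp G K}"
  proof
    fix K assume "K \<in> {K\<in>comps H. bipartite_comp H K}"
    then have K: "K \<in> comps H" "bipartite_comp H K" by auto
    then have "is_comp_of G H K" using all by blast
    then have K2: "K \<in> comps G" "comp_edges G K = comp_edges H K" by (auto simp: is_comp_of_def)
    then have "bipartite_comp G K" using K(2) by (simp add: bipartite_comp_def bipartition_def)
    then show "K \<in> {K\<in>comps G. bipartite_comp G K}" using K2 by simp
  qed
  moreover have "finite {K\<in>comps G. bipartite_comp G K}" by (simp add: finite_comps)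
  ultimately show ?thesis unfolding bicomp_def by (rule card_mono[rotated])
qed

theorem mainTheorem10:
  fixes G :: "('v::finite) edge set" and F :: "(real ^ 'v) set"
  assumes "mixed_graph G"
  shows "F facet_of nonneg_cone (edge_polytope G) \<longleftrightarrow>
         (\<exists>H. facet_subgraph G H \<and> nonneg_cone (edge_polytope H) = F)"
proof -
  let ?C = "convex_cone hull (rho ` G)"
  have Ceq: "nonneg_cone (edge_polytope G) = ?C" by (rule cone_eq)
  have finG: "finite (rho ` G)" by (simp add: finite_edges)
  have rG: "dim (rho ` G) + bicomp G = dim (UNIV :: (real^'v) set)" using rank[OF assms] .
  have W: "\<And>x. x \<in> G \<Longrightarrow> wf_edge x" using assms by (auto simp: mixed_graph_def)
  show ?thesis
  proof
    assume Fac: "F facet_of nonneg_cone (edge_polytope G)"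
    then have Ff: "F face_of ?C" "F \<noteq> {}" "aff_dim F = aff_dim ?C - 1"
      using Ceq by (auto simp: facet_of_def)
    have "polyhedron ?C" using polyhedron_convex_cone_hull[OF finG] .
    then have "F exposed_face_of ?C" using exposed_face_of_polyhedron Ff(1) by blast
    then obtain a b where ab: "?C \<subseteq> {x. a \<bullet> x \<le> b}" "F = ?C \<inter> {x. a \<bullet> x = b}"
      by (auto simp: exposed_face_of_def)
    have "0 \<le> b" using ab(1) convex_cone_hull_contains_0 by fastforce
    obtain y where y: "y \<in> F" using Ff(2) by blast
    have yC: "y \<in> ?C" "a \<bullet> y = b" using y ab(2) by auto
    then have "2 *\<^sub>R y \<in> ?C" by (simp add: convex_cone_hull_mul)
    then have "a \<bullet> (2 *\<^sub>R y) \<le> b" using ab(1) by auto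
    then have b0: "b = 0" using yC(2) \<open>0 \<le> b\<close> by simp
    define a' where "a' = - a"
    have nn: "\<forall>v\<in>rho ` G. 0 \<le> a' \<bullet> v"
    proof
      fix v assume "v \<in> rho ` G"
      then have "v \<in> ?C" by (rule hull_inc)
      then show "0 \<le> a' \<bullet> v" using ab(1) b0 by (auto simp: a'_def)
    qed
    have F2: "F = ?C \<inter> {x. a' \<bullet> x = 0}" using ab(2) b0 by (auto simp: a'_def)
    define H where "H = {e\<in>G. a' \<bullet> rho e = 0}"
    have HG: "H \<subseteq> G" by (auto simp: H_def)
    have mH: "mixed_graph H" using sub_mixed[OF assms HG] .
    have rhoH: "{v\<in>rho ` G. a' \<bullet> v = 0} = rho ` H" by (auto simp: H_def)
    have FH: "F = convex_cone hull (rho ` H)" using F2 expose[OF finG nn] rhoH by simp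
    have "int (dim (rho ` H)) = int (dim (rho ` G)) - 1"
      using Ff(3) FH aff_dim_cc[of "rho ` H"] aff_dim_cc[of "rho ` G"] by simp
    then have dims: "dim (rho ` H) + 1 = dim (rho ` G)" by linarith
    have rH: "dim (rho ` H) + bicomp H = dim (UNIV :: (real^'v) set)" using rank[OF mH] .
    have bic: "bicomp H = bicomp G + 1" using dims rH rG by linarith
    have a'H: "a' \<in> Ann H" by (auto simp: Ann_def H_def)
    have pos: "\<forall>e\<in>G-H. 0 < a' \<bullet> rho e"
    proof
      fix e assume e: "e \<in> G - H"
      then have "0 \<le> a' \<bullet> rho e" using nn by auto
      moreover have "a' \<bullet> rho e \<noteq> 0" using e by (auto simp: H_def)
      ultimately show "0 < a' \<bullet> rho e" by simp
    qed
    have "H \<noteq> G" using dims by auto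
    then obtain e0 where e0: "e0 \<in> G - H" using HG by blast
    have "0 < a' \<bullet> rho e0" using pos e0 by blast
    then have a'G: "a' \<notin> Ann G" using e0 unfolding Ann_def by force
    have spG: "span (Ann G) = Ann G" using subspace_Ann[of G] by simp
    have span_eq: "span (insert a' (Ann G)) = Ann H"
    proof (rule subspace_dim_equal)
      show "subspace (span (insert a' (Ann G)))" by simp
      show "subspace (Ann H)" by (rule subspace_Ann)
      show "span (insert a' (Ann G)) \<subseteq> Ann H"
        using a'H Ann_anti[OF HG] subspace_Ann[of H] by (intro span_minimal) auto
      have a'sp: "a' \<notin> span (Ann G)" using a'G spG by metis
      have "dim (span (insert a' (Ann G))) = dim (Ann G) + 1"
        using a'sp by (simp add: dim_insert)
      then show "dim (Ann H) \<le> dim (span (insert a' (Ann G)))"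
        using dim_Ann[OF mH] dim_Ann[OF assms] bic by simp
    qed
    have "facet_subgraph G H"
      unfolding facet_subgraph_def
    proof (intro conjI ballI impI)
      show "H \<subseteq> G" by (rule HG)
      show "bicomp H = bicomp G + 1" by (rule bic)
      fix K assume K: "K \<in> comps H" "bipartite_comp H K \<and> \<not> is_comp_of G H K"
      then obtain L R where bp: "bipartition H K L R" by (auto simp: bipartite_comp_def)
      have LR: "L \<inter> R = {}" using bp by (auto simp: bipartition_def)
      have bH: "bvec L R \<in> Ann H" using bip_Ann[OF mH K(1) bp] .
      then have "bvec L R \<in> span (insert a' (Ann G))" using span_eq by simp
      then obtain k where k: "bvec L R - k *\<^sub>R a' \<in> span (Ann G)" using span_breakdown_eq by blast
      then have kG: "bvec L R - k *\<^sub>R a' \<in> Ann G" using spG by simp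
      have kk: "bvec L R \<bullet> rho e = k * (a' \<bullet> rho e)" if "e \<in> G" for e
        using kG that by (auto simp: Ann_def inner_diff_left)
      have "k \<noteq> 0"
      proof
        assume "k = 0"
        then have "bvec L R \<in> Ann G" using kG by simp
        moreover have "\<forall>e\<in>G-H. a' \<bullet> rho e \<noteq> 0" using pos by force
        ultimately have "is_comp_of G H K" using comp_lemma[OF assms HG K(1) bp _ a'H] by blast
        then show False using K by blast
      qed
      show "\<exists>L R. bipartition H K L R \<and> (\<forall>x\<in>G - H. edge_ok (proj L) (proj R) x)"
      proof (cases "k > 0")
        case True
        have "\<forall>x\<in>G-H. edge_ok (proj L) (proj R) x"
        proof
          fix x assume x: "x \<in> G - H"
          have "0 < k * (a' \<bullet> rho x)" using x pos True by simp
          then have "bvec L R \<bullet> rho x > 0" using kk[of x] x by simp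
          then show "edge_ok (proj L) (proj R) x" using okiff[OF LR W[of x]] x by simp
        qed
        then show ?thesis using bp by blast
      next
        case False
        then have kn: "k < 0" using \<open>k \<noteq> 0\<close> by simp
        have bp': "bipartition H K R L"
          unfolding bipartition_def
        proof (intro conjI ballI)
          show "R \<union> L = K" using bp by (auto simp: bipartition_def)
          show "R \<inter> L = {}" using LR by blast
        next
          fix e assume "e \<in> comp_edges H K"
          then obtain p q where pq: "p \<in> L" "q \<in> R" "e = {p,q}" using bp by (auto simp: bipartition_def)
          then show "\<exists>a b. a \<in> R \<and> b \<in> L \<and> e = {a,b}" by (intro exI[of _ q] exI[of _ p]) auto
        qed
        have RL: "R \<inter> L = {}" using LR by blast
        have neg: "bvec R L = - bvec L R" using LR by (auto simp: vec_eq_iff bvec_nth bt_def)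
        have "\<forall>x\<in>G-H. edge_ok (proj R) (proj L) x"
        proof
          fix x assume x: "x \<in> G - H"
          have "k * (a' \<bullet> rho x) < 0" using x pos kn by (simp add: mult_neg_pos)
          then have "bvec R L \<bullet> rho x > 0" using kk[of x] x neg by simp
          then show "edge_ok (proj R) (proj L) x" using okiff[OF RL W[of x]] x by simp
        qed
        then show ?thesis using bp' by blast
      qed
    qed
    moreover have "nonneg_cone (edge_polytope H) = F" using cone_eq FH by simp
    ultimately show "\<exists>H. facet_subgraph G H \<and> nonneg_cone (edge_polytope H) = F" by blast
  next
    assume "\<exists>H. facet_subgraph G H \<and> nonneg_cone (edge_polytope H) = F"
    then obtain H where fs: "facet_subgraph G H" and FH0: "nonneg_cone (edge_polytope H) = F" by blast
    have HG: "H \<subseteq> G" and bic: "bicomp H = bicomp G + 1"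
      using fs unfolding facet_subgraph_def by blast+
    have cond: "\<And>C. C \<in> comps H \<Longrightarrow> bipartite_comp H C \<Longrightarrow> \<not> is_comp_of G H C \<Longrightarrow>
        (\<exists>L R. bipartition H C L R \<and> (\<forall>x\<in>G - H. edge_ok (proj L) (proj R) x))"
      using fs unfolding facet_subgraph_def by blast
    have mH: "mixed_graph H" using sub_mixed[OF assms HG] .
    have FH: "F = convex_cone hull (rho ` H)" using FH0 cone_eq[of H] by metis
    obtain K where K: "K \<in> comps H" "bipartite_comp H K" "\<not> is_comp_of G H K"
    proof -
      have "\<not> (\<forall>K\<in>comps H. bipartite_comp H K \<longrightarrow> is_comp_of G H K)"
        using bicomp_le[of H G] bic by auto
      then show ?thesis using that by blast
    qed
    obtain L R where bp: "bipartition H K L R" and ok: "\<forall>x\<in>G - H. edge_ok (proj L) (proj R) x"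
      using cond[OF K] by blast
    have LR: "L \<inter> R = {}" using bp by (auto simp: bipartition_def)
    define b where "b = bvec L R"
    have bH: "b \<in> Ann H" unfolding b_def using bip_Ann[OF mH K(1) bp] .
    have posb: "0 < b \<bullet> rho e" if "e \<in> G - H" for e
      using okiff[OF LR W[of e]] ok that by (auto simp: b_def)
    have zb: "b \<bullet> rho e = 0" if "e \<in> H" for e using bH that by (auto simp: Ann_def)
    have nn: "\<forall>v\<in>rho ` G. 0 \<le> b \<bullet> v"
    proof
      fix v assume "v \<in> rho ` G"
      then obtain e where e: "e \<in> G" "v = rho e" by blast
      show "0 \<le> b \<bullet> v"
      proof (cases "e \<in> H")
        case True then show ?thesis using zb e by simp
      next
        case False then show ?thesis using posb[of e] e by simp
      qed
    qed
    have rhoH: "{v\<in>rho ` G. b \<bullet> v = 0} = rho ` H"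
    proof
      show "{v\<in>rho ` G. b \<bullet> v = 0} \<subseteq> rho ` H"
      proof
        fix v assume v: "v \<in> {v\<in>rho ` G. b \<bullet> v = 0}"
        then obtain e where e: "e \<in> G" "v = rho e" "b \<bullet> rho e = 0" by blast
        then have "e \<in> H" using posb[of e] by (cases "e \<in> H") auto
        then show "v \<in> rho ` H" using e by blast
      qed
      show "rho ` H \<subseteq> {v\<in>rho ` G. b \<bullet> v = 0}" using HG zb by auto
    qed
    have Fe: "F = ?C \<inter> {x. b \<bullet> x = 0}" using FH expose[OF finG nn] rhoH by simp
    have face: "F face_of ?C"
      unfolding Fe
    proof (rule face_of_Int_supporting_hyperplane_ge)
      show "convex ?C" by (rule convex_convex_cone_hull)
      fix x assume "x \<in> ?C" then show "0 \<le> b \<bullet> x" using cone_nonneg[OF finG nn] by blast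
    qed
    have ne: "F \<noteq> {}" using Fe convex_cone_hull_contains_0[of "rho ` G"] by auto
    have rH: "dim (rho ` H) + bicomp H = dim (UNIV :: (real^'v) set)" using rank[OF mH] .
    have "aff_dim F = aff_dim ?C - 1"
      using FH aff_dim_cc[of "rho ` H"] aff_dim_cc[of "rho ` G"] rH rG bic by simp
    then show "F facet_of nonneg_cone (edge_polytope G)"
      unfolding Ceq facet_of_def using face ne by blast
  qed
qed


end
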